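(* For a finite set of types $T$ and a positive integer $n$, $\gamma(\mathcal{G}_T^n)\ge\mathrm{GPoA}(\mathcal{G}_T^n)$.
   Context: Fix a positive integer $n$ and a finite set of resource types $T=\{(c_1,f_1),\dots,(c_m,f_m)\}$, $c_t,f_t:\{1,\dots,n\}\to\mathbb{R}$, extended by $c_t(0)=f_t(0)=f_t(n+1)=0$. The class $\mathcal{G}_T^n$ consists of all local resource allocation games: agent set $N=\{1,\dots,n\}$; finite resource set $\mathcal{R}$; for each $r$ a value $v_r\ge0$ and a type $(c,f)\in T$, with $c_r=v_rc$, $f_r=v_rf$; action sets $\mathcal{A}_i\subseteq2^{\mathcal{R}}$, $\mathcal{A}=\prod_i\mathcal{A}_i$; $|a|_r$ = number of agents $i$ with $r\in a_i$; $C(a)=\sum_rc_r(|a|_r)$, $J_i(a)=\sum_{r\in a_i}f_r(|a|_r)$. $\mathrm{GPoA}(\mathcal{G}_T^n)=\inf\{\lambda/(1-\mu):\lambda>0,\mu<1\}$ over $(\lambda,\mu)$ such that for every $G\in\mathcal{G}_T^n$ and all $a,a'\in\mathcal{A}$: $\sum_iJ_i(a'_i,a_{-i})-\sum_iJ_i(a)+C(a)\le\lambda C(a')+\mu C(a)$. With $\mathbb{N}=\{0,1,\dots\}$, $\mathcal{I}=\{(x,y,z)\in\mathbb{N}^3:1\le x+y-z\le n,\ z\le\min\{x,y\}\}$ and $\mathcal{I}_{\mathcal{R}}=\{(x,y,z)\in\mathcal{I}:x+y-z=n\text{ or }(x-z)(y-z)z=0\}$. $\mathcal{S}(\mathcal{G}_T^n)$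 is the set of $(\lambda,\mu)$ with $\lambda>0$, $\mu<1$ such that for all $(c,f)\in T$ and all $(x,y,z)\in\mathcal{I}_{\mathcal{R}}$: $(z-x)f(x)+(y-z)f(x+1)+c(x)\le\lambda c(y)+\mu c(x)$. Define $\gamma(\mathcal{G}_T^n)=\inf\{\lambda/(1-\mu):(\lambda,\mu)\in\mathcal{S}(\mathcal{G}_T^n)\}$. *)

theory Defs
  imports Complex_Main "HOL-Library.Extended_Real"
begin

text \<open>A resource type is a pair (c, f) of functions; only their values on 1..n matter,
  and they are extended by c(0) = f(0) = f(n+1) = 0 (values beyond n are never used
  except f(n+1)).\<close>

type_synonym rtype = "(nat \<Rightarrow> real) \<times> (nat \<Rightarrow> real)"

definition ext_fun :: "nat \<Rightarrow> (nat \<Rightarrow> real) \<Rightarrow> nat \<Rightarrow> real" where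
  "ext_fun n g k = (if 1 \<le> k \<and> k \<le> n then g k else 0)"

definition lra_game :: "nat \<Rightarrow> rtype set \<Rightarrow> nat set \<Rightarrow> (nat \<Rightarrow> real) \<Rightarrow> (nat \<Rightarrow> rtype)
    \<Rightarrow> (nat \<Rightarrow> nat set set) \<Rightarrow> bool" where
  "lra_game n T R v ty A \<longleftrightarrow> finite R \<and> (\<forall>r\<in>R. v r \<ge> 0 \<and> ty r \<in> T)
     \<and> (\<forall>i\<in>{1..n}. A i \<subseteq> Pow R)"

definition is_profile :: "nat \<Rightarrow> (nat \<Rightarrow> nat set set) \<Rightarrow> (nat \<Rightarrow> nat set) \<Rightarrow> bool" where
  "is_profile n A a \<longleftrightarrow> (\<forall>i\<in>{1..n}. a i \<in> A i)"

definition load :: "nat \<Rightarrow> (nat \<Rightarrow> nat set) \<Rightarrow> nat \<Rightarrow> nat" where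
  "load n a r = card {i\<in>{1..n}. r \<in> a i}"

definition welfare :: "nat \<Rightarrow> nat set \<Rightarrow> (nat \<Rightarrow> real) \<Rightarrow> (nat \<Rightarrow> rtype) \<Rightarrow> (nat \<Rightarrow> nat set) \<Rightarrow> real" where
  "welfare n R v ty a = (\<Sum>r\<in>R. v r * ext_fun n (fst (ty r)) (load n a r))"

definition utility :: "nat \<Rightarrow> (nat \<Rightarrow> real) \<Rightarrow> (nat \<Rightarrow> rtype) \<Rightarrow> (nat \<Rightarrow> nat set) \<Rightarrow> nat \<Rightarrow> real" where
  "utility n v ty a i = (\<Sum>r\<in>a i. v r * ext_fun n (snd (ty r)) (load n a r))"

definition game_smooth :: "nat \<Rightarrow> rtype set \<Rightarrow> real \<Rightarrow> real \<Rightarrow> bool" where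
  "game_smooth n T lam mu \<longleftrightarrow>
     (\<forall>R v ty A a a'. lra_game n T R v ty A \<and> is_profile n A a \<and> is_profile n A a' \<longrightarrow>
        (\<Sum>i\<in>{1..n}. utility n v ty (a(i := a' i)) i) - (\<Sum>i\<in>{1..n}. utility n v ty a i)
          + welfare n R v ty a
        \<le> lam * welfare n R v ty a' + mu * welfare n R v ty a)"

text \<open>Infimum taken in the extended reals, so that inf of the empty set is +\<infinity>.\<close>

definition GPoA :: "nat \<Rightarrow> rtype set \<Rightarrow> ereal" where
  "GPoA n T = Inf {ereal (lam / (1 - mu)) | lam mu. lam > 0 \<and> mu < 1 \<and> game_smooth n T lam mu}"

definition I_set :: "nat \<Rightarrow> (nat \<times> nat \<times> nat) set" where
  "I_set n = {(x, y, z). 1 \<le> x + y - z \<and> x + y - z \<le> n \<and> z \<le> min x y}"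

definition I_R :: "nat \<Rightarrow> (nat \<times> nat \<times> nat) set" where
  "I_R n = {(x, y, z) \<in> I_set n. x + y - z = n \<or> (x - z) * (y - z) * z = 0}"

definition S_set :: "nat \<Rightarrow> rtype set \<Rightarrow> (real \<times> real) set" where
  "S_set n T = {(lam, mu). lam > 0 \<and> mu < 1 \<and>
     (\<forall>(c, f)\<in>T. \<forall>(x, y, z)\<in>I_R n.
        (real z - real x) * ext_fun n f x + (real y - real z) * ext_fun n f (x + 1)
          + ext_fun n c x
        \<le> lam * ext_fun n c y + mu * ext_fun n c x)}"

definition gamma :: "nat \<Rightarrow> rtype set \<Rightarrow> ereal" where
  "gamma n T = Inf {ereal (lam / (1 - mu)) | lam mu. (lam, mu) \<in> S_set n T}"

end

theory Submission
  imports Defs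
begin

lemma pointwise:
  assumes S: "(lam, mu) \<in> S_set n T" and cf: "(c, f) \<in> T"
    and zx: "z \<le> x" and xw: "x + w \<le> n"
  shows "(real z - real x) * ext_fun n f x + real w * ext_fun n f (x + 1) + ext_fun n c x
         \<le> lam * ext_fun n c (z + w) + mu * ext_fun n c x"
proof (cases "x + w = 0")
  case True
  then show ?thesis using zx by (simp add: ext_fun_def)
next
  case False
  define y where "y = z + w"
  have H: "\<And>x y z. (x, y, z) \<in> I_R n \<Longrightarrow>
        (real z - real x) * ext_fun n f x + (real y - real z) * ext_fun n f (x + 1)
          + ext_fun n c x
        \<le> lam * ext_fun n c y + mu * ext_fun n c x"
    using S cf unfolding S_set_def by fastforce
  define F0 where "F0 = ext_fun n f x"
  define F1 where "F1 = ext_fun n f (x+1)"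
  have yn: "y \<le> n" "x \<le> n" using xw zx y_def by auto
  show ?thesis
  proof (cases "F0 \<ge> F1")
    case True
    define z1 where "z1 = min x y"
    have "(x, y, z1) \<in> I_R n" unfolding I_R_def I_set_def z1_def
      using False yn y_def zx xw by auto
    from H[OF this] have h: "(real z1 - real x) * F0 + (real y - real z1) * F1 + ext_fun n c x
        \<le> lam * ext_fun n c y + mu * ext_fun n c x" unfolding F0_def F1_def .
    have z1: "z \<le> z1" using zx y_def z1_def by auto
    have "(real z1 - real z) * (F0 - F1) \<ge> 0" using z1 True by simp
    then have "(real z - real x) * F0 + real w * F1 \<le> (real z1 - real x) * F0 + (real y - real z1) * F1"
      using y_def by (simp add: algebra_simps)
    then show ?thesis using h y_def F0_def F1_def by simp
  next
    case False2: False
    define z0 where "z0 = (x + y) - n"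
    have "(x, y, z0) \<in> I_R n" unfolding I_R_def I_set_def z0_def
      using False yn y_def zx xw by auto
    from H[OF this] have h: "(real z0 - real x) * F0 + (real y - real z0) * F1 + ext_fun n c x
        \<le> lam * ext_fun n c y + mu * ext_fun n c x" unfolding F0_def F1_def .
    have z0: "z0 \<le> z" using zx y_def z0_def xw by auto
    have "(real z - real z0) * (F1 - F0) \<ge> 0" using z0 False2 by simp
    then have "(real z - real x) * F0 + real w * F1 \<le> (real z0 - real x) * F0 + (real y - real z0) * F1"
      using y_def by (simp add: algebra_simps)
    then show ?thesis using h y_def F0_def F1_def by simp
  qed
qed

lemma swap_sum:
  assumes "finite R" "\<forall>i\<in>{1..n}. B i \<subseteq> R"
  shows "(\<Sum>i\<in>{1..n::nat}. \<Sum>r\<in>B i. h i r) = (\<Sum>r\<in>R. \<Sum>i\<in>{i\<in>{1..n}. r\<in>B i}. (h i r :: real))"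
proof -
  have "(\<Sum>i\<in>{1..n}. \<Sum>r\<in>B i. h i r) = (\<Sum>i\<in>{1..n}. \<Sum>r\<in>R. if r\<in>B i then h i r else 0)"
  proof (rule sum.cong[OF refl])
    fix i assume "i \<in> {1..n}"
    then have "B i = {r\<in>R. r \<in> B i}" using assms by auto
    then show "(\<Sum>r\<in>B i. h i r) = (\<Sum>r\<in>R. if r\<in>B i then h i r else 0)"
      using assms(1) by (metis (no_types) sum.inter_filter)
  qed
  also have "\<dots> = (\<Sum>r\<in>R. \<Sum>i\<in>{1..n}. if r\<in>B i then h i r else 0)" by (rule sum.swap)
  also have "\<dots> = (\<Sum>r\<in>R. \<Sum>i\<in>{i\<in>{1..n}. r\<in>B i}. h i r)"
    by (rule sum.cong[OF refl]) (simp only: sum.inter_filter[OF finite_atLeastAtMost])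
  finally show ?thesis .
qed

lemma load_upd:
  assumes "i \<in> {1..n}" "r \<in> b"
  shows "load n (a(i := b)) r = (if r \<in> a i then load n a r else Suc (load n a r))"
proof (cases "r \<in> a i")
  case True
  then have "{j\<in>{1..n}. r \<in> (a(i := b)) j} = {j\<in>{1..n}. r \<in> a j}" using assms by auto
  then show ?thesis using True unfolding load_def by simp
next
  case False
  then have "{j\<in>{1..n}. r \<in> (a(i := b)) j} = insert i {j\<in>{1..n}. r \<in> a j}"
    using assms by auto
  then show ?thesis using False unfolding load_def by simp
qed

lemma smooth:
  assumes S: "(lam, mu) \<in> S_set n T"
  shows "game_smooth n T lam mu"
  unfolding game_smooth_def
proof (intro allI impI, elim conjE)
  fix R v ty A a a'
  assume G: "lra_game n T R v ty A" and pa: "is_profile n A a" and pa': "is_profile n A a'"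
  have finR: "finite R" and vR: "\<And>r. r \<in> R \<Longrightarrow> v r \<ge> 0 \<and> ty r \<in> T"
    and AR: "\<forall>i\<in>{1..n}. A i \<subseteq> Pow R" using G unfolding lra_game_def by auto
  have aR: "\<forall>i\<in>{1..n}. a i \<subseteq> R" using pa AR unfolding is_profile_def by blast
  have aR': "\<forall>i\<in>{1..n}. a' i \<subseteq> R" using pa' AR unfolding is_profile_def by blast
  define F where "F r = ext_fun n (snd (ty r))" for r
  define C where "C r = ext_fun n (fst (ty r))" for r
  define X where "X r = load n a r" for r
  define Y where "Y r = load n a' r" for r
  define ZS where "ZS r = {i\<in>{1..n}. r \<in> a' i \<and> r \<in> a i}" for r
  define WS where "WS r = {i\<in>{1..n}. r \<in> a' i \<and> r \<notin> a i}" for r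
  define h where "h i r = v r * F r (if r \<in> a i then X r else X r + 1)" for i r
  have U1: "(\<Sum>i\<in>{1..n}. utility n v ty (a(i := a' i)) i)
      = (\<Sum>r\<in>R. v r * (real (card (ZS r)) * F r (X r) + real (card (WS r)) * F r (X r + 1)))"
  proof -
    have "(\<Sum>i\<in>{1..n}. utility n v ty (a(i := a' i)) i) = (\<Sum>i\<in>{1..n}. \<Sum>r\<in>a' i. h i r)"
    proof (rule sum.cong[OF refl])
      fix i assume i: "i \<in> {1..n}"
      show "utility n v ty (a(i := a' i)) i = (\<Sum>r\<in>a' i. h i r)"
        unfolding utility_def h_def F_def X_def
        by (rule sum.cong) (auto simp: load_upd[OF i])
    qed
    also have "\<dots> = (\<Sum>r\<in>R. \<Sum>i\<in>{i\<in>{1..n}. r\<in>a' i}. h i r)"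
      by (rule swap_sum[OF finR aR'])
    also have "\<dots> = (\<Sum>r\<in>R. v r * (real (card (ZS r)) * F r (X r) + real (card (WS r)) * F r (X r + 1)))"
    proof (rule sum.cong[OF refl])
      fix r
      have eq: "{i\<in>{1..n}. r\<in>a' i} = ZS r \<union> WS r" "ZS r \<inter> WS r = {}"
        "finite (ZS r)" "finite (WS r)" unfolding ZS_def WS_def by auto
      have "(\<Sum>i\<in>{i\<in>{1..n}. r\<in>a' i}. h i r) = (\<Sum>i\<in>ZS r. h i r) + (\<Sum>i\<in>WS r. h i r)"
        using eq by (simp add: sum.union_disjoint)
      also have "(\<Sum>i\<in>ZS r. h i r) = (\<Sum>i\<in>ZS r. v r * F r (X r))"
        by (rule sum.cong) (auto simp: h_def ZS_def)
      also have "(\<Sum>i\<in>WS r. h i r) = (\<Sum>i\<in>WS r. v r * F r (X r + 1))"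
        by (rule sum.cong) (auto simp: h_def WS_def)
      finally show "(\<Sum>i\<in>{i\<in>{1..n}. r\<in>a' i}. h i r) = v r * (real (card (ZS r)) * F r (X r) + real (card (WS r)) * F r (X r + 1))"
        by (simp add: algebra_simps)
    qed
    finally show ?thesis .
  qed
  have U2: "(\<Sum>i\<in>{1..n}. utility n v ty a i) = (\<Sum>r\<in>R. v r * (real (X r) * F r (X r)))"
  proof -
    have "(\<Sum>i\<in>{1..n}. utility n v ty a i) = (\<Sum>i\<in>{1..n}. \<Sum>r\<in>a i. v r * F r (X r))"
      unfolding utility_def F_def X_def by simp
    also have "\<dots> = (\<Sum>r\<in>R. \<Sum>i\<in>{i\<in>{1..n}. r\<in>a i}. v r * F r (X r))"
      by (rule swap_sum[OF finR aR])
    also have "\<dots> = (\<Sum>r\<in>R. v r * (real (X r) * F r (X r)))"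
    proof (rule sum.cong[OF refl])
      fix r
      have c: "card {i\<in>{1..n}. r\<in>a i} = X r" by (simp add: X_def load_def)
      have "(\<Sum>i\<in>{i\<in>{1..n}. r\<in>a i}. v r * F r (X r)) = real (X r) * (v r * F r (X r))"
        unfolding sum_constant c ..
      then show "(\<Sum>i\<in>{i\<in>{1..n}. r\<in>a i}. v r * F r (X r)) = v r * (real (X r) * F r (X r))"
        by (simp only: mult.left_commute)
    qed
    finally show ?thesis .
  qed
  have W: "welfare n R v ty a = (\<Sum>r\<in>R. v r * C r (X r))"
    "welfare n R v ty a' = (\<Sum>r\<in>R. v r * C r (Y r))"
    unfolding welfare_def C_def X_def Y_def by simp_all
  have pt: "v r * (real (card (ZS r)) * F r (X r) + real (card (WS r)) * F r (X r + 1))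
      - v r * (real (X r) * F r (X r)) + v r * C r (X r)
      \<le> lam * (v r * C r (Y r)) + mu * (v r * C r (X r))" if r: "r \<in> R" for r
  proof -
    have XS: "X r = card {i\<in>{1..n}. r \<in> a i}" unfolding X_def load_def ..
    have YS: "Y r = card {i\<in>{1..n}. r \<in> a' i}" unfolding Y_def load_def ..
    have "{i\<in>{1..n}. r\<in>a' i} = ZS r \<union> WS r" "ZS r \<inter> WS r = {}"
        "finite (ZS r)" "finite (WS r)" unfolding ZS_def WS_def by auto
    then have Yeq: "Y r = card (ZS r) + card (WS r)" using YS by (simp add: card_Un_disjoint)
    have "ZS r \<subseteq> {i\<in>{1..n}. r \<in> a i}" unfolding ZS_def by auto
    then have zx: "card (ZS r) \<le> X r" using XS by (simp add: card_mono)
    have d1: "{i\<in>{1..n}. r \<in> a i} \<union> WS r \<subseteq> {1..n}" and d2: "{i\<in>{1..n}. r \<in> a i} \<inter> WS r = {}"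
      and d3: "finite (WS r)" and d4: "finite {i\<in>{1..n}. r \<in> a i}" unfolding WS_def by auto
    have "card ({i\<in>{1..n}. r \<in> a i} \<union> WS r) = X r + card (WS r)"
      using card_Un_disjoint[OF d4 d3 d2] XS by simp
    moreover have "card ({i\<in>{1..n}. r \<in> a i} \<union> WS r) \<le> card {1..n}"
      by (rule card_mono[OF _ d1]) simp
    ultimately have bnd: "X r + card (WS r) \<le> n" by simp
    have tyT: "(fst (ty r), snd (ty r)) \<in> T" using vR[OF r] by simp
    note P0 = pointwise[OF S tyT zx bnd]
    have P: "(real (card (ZS r)) - real (X r)) * F r (X r) + real (card (WS r)) * F r (X r + 1) + C r (X r)
       \<le> lam * C r (Y r) + mu * C r (X r)"
      using P0 unfolding F_def C_def Yeq .
    have "v r * ((real (card (ZS r)) - real (X r)) * F r (X r) + real (card (WS r)) * F r (X r + 1) + C r (X r))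
       \<le> v r * (lam * C r (Y r) + mu * C r (X r))"
      using P vR[OF r] by (simp add: mult_left_mono)
    then show ?thesis by (simp add: algebra_simps)
  qed
  have "(\<Sum>r\<in>R. v r * (real (card (ZS r)) * F r (X r) + real (card (WS r)) * F r (X r + 1))
      - v r * (real (X r) * F r (X r)) + v r * C r (X r))
      \<le> (\<Sum>r\<in>R. lam * (v r * C r (Y r)) + mu * (v r * C r (X r)))"
    by (rule sum_mono) (rule pt)
  then show "(\<Sum>i\<in>{1..n}. utility n v ty (a(i := a' i)) i) - (\<Sum>i\<in>{1..n}. utility n v ty a i)
          + welfare n R v ty a
        \<le> lam * welfare n R v ty a' + mu * welfare n R v ty a"
    unfolding U1 U2 W by (simp add: sum.distrib sum_subtractf sum_distrib_left)
qed

theorem lemma2: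
  fixes n :: nat and T :: "rtype set"
  assumes "finite T" and "n \<ge> 1"
  shows "gamma n T \<ge> GPoA n T"
proof -
  have "{ereal (lam / (1 - mu)) | lam mu. (lam, mu) \<in> S_set n T}
     \<subseteq> {ereal (lam / (1 - mu)) | lam mu. lam > 0 \<and> mu < 1 \<and> game_smooth n T lam mu}"
  proof (rule subsetI)
    fix e assume "e \<in> {ereal (lam / (1 - mu)) | lam mu. (lam, mu) \<in> S_set n T}"
    then obtain lam mu where e: "e = ereal (lam / (1 - mu))" and S: "(lam, mu) \<in> S_set n T" by blast
    have "lam > 0" "mu < 1" using S unfolding S_set_def by auto
    then show "e \<in> {ereal (lam / (1 - mu)) | lam mu. lam > 0 \<and> mu < 1 \<and> game_smooth n T lam mu}"
      using smooth[OF S] e by blast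
  qed
  then show ?thesis unfolding gamma_def GPoA_def by (rule Inf_superset_mono)
qed

end
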